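(* Let $n\ge 2d\ge 2$ be integers. There is a set $\mathcal{M}_d$ of $d$-matchings on $[n]$ of size $N:=|\mathcal{M}_d|\ge \binom{n}{d}/(4\cdot 2^d)$ and a set $\mathcal{S}_d$ of $d$-subsets of $[n]$ such that for every $S\in\mathcal{S}_d$ there is a unique matching $M\in\mathcal{M}_d$ which fully crosses $S$, and for every $M\in\mathcal{M}_d$ there is at least one $S\in\mathcal{S}_d$ which $M$ fully crosses. Moreover, for every $S\in\mathcal{S}_d$ there is a unique $M\in\mathcal{M}_d$ with $q_M(\mathbf{1}_S)\neq 0$, so the span of $\{q_M:M\in\mathcal{M}_d\}$ has dimension exactly $N$.
   Context: A $d$-matching on $[n]=\{1,\dots,n\}$ is a set of $d$ pairwise disjoint $2$-element subsets (edges) of $[n]$. For such $M$, $q_M(x_1,\dots,x_n)=\prod_{\{i,j\}\in M,\, i<j}(x_i-x_j)$. A $d$-matching $M$ fully crosses a $d$-subset $S\subseteq[n]$ if every edge of $M$ has exactly one endpoint in $S$. $\mathbf{1}_S\in\mathbb{R}^n$ is the indicator vector of $S$. *)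

theory Defs
  imports Complex_Main "HOL-Library.Function_Algebras"
begin

definition is_matching :: "nat \<Rightarrow> nat \<Rightarrow> nat set set \<Rightarrow> bool" where
  "is_matching n d M \<longleftrightarrow>
     (\<forall>e\<in>M. e \<subseteq> {1..n} \<and> card e = 2) \<and>
     (\<forall>e\<in>M. \<forall>e'\<in>M. e \<noteq> e' \<longrightarrow> e \<inter> e' = {}) \<and>
     finite M \<and> card M = d"

text \<open>q_M(x) = product over edges {i,j}, i<j, of (x_i - x_j); points of R^n are
  functions nat => real (only coordinates 1..n matter).\<close>
definition qM :: "nat set set \<Rightarrow> (nat \<Rightarrow> real) \<Rightarrow> real" where
  "qM M x = (\<Prod>e\<in>M. x (Min e) - x (Max e))"

definition fully_crosses :: "nat set set \<Rightarrow> nat set \<Rightarrow> bool" where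
  "fully_crosses M S \<longleftrightarrow> (\<forall>e\<in>M. card (e \<inter> S) = 1)"

definition indic :: "nat set \<Rightarrow> nat \<Rightarrow> real" where
  "indic S = (\<lambda>i. if i \<in> S then 1 else 0)"

definition fscale :: "real \<Rightarrow> ((nat \<Rightarrow> real) \<Rightarrow> real) \<Rightarrow> ((nat \<Rightarrow> real) \<Rightarrow> real)" where
  "fscale r f = (\<lambda>x. r * f x)"

end

theory Submission
  imports Defs
begin

lemma vs_fscale: "vector_space fscale"
  by unfold_locales (auto simp: fscale_def fun_eq_iff algebra_simps)

lemma sum_fun_apply:
  fixes h :: "'a \<Rightarrow> 'b \<Rightarrow> real"
  shows "(\<Sum>x\<in>A. h x) p = (\<Sum>x\<in>A. h x p)"
  by (induction A rule: infinite_finite_induct) auto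

lemma qM_indic:
  assumes "is_matching n d M"
  shows "qM M (indic S) \<noteq> 0 \<longleftrightarrow> fully_crosses M S"
proof -
  have fin: "finite M" using assms by (simp add: is_matching_def)
  have f: "(indic S (Min e) - indic S (Max e) \<noteq> 0) = (card (e \<inter> S) = 1)" if "e \<in> M" for e
  proof -
    from assms that have "card e = 2" by (simp add: is_matching_def)
    then obtain x y where "e = {x,y}" "x \<noteq> y" by (auto simp: card_2_iff)
    then obtain a b where e: "e = {a,b}" "a < b"
      by (metis insert_commute linorder_neqE_nat)
    then have "Min e = a" "Max e = b" by auto
    then show ?thesis using e
      by (cases "a \<in> S"; cases "b \<in> S"; simp add: indic_def Int_insert_left)
  qed
  show ?thesis
    unfolding qM_def fully_crosses_def
    using fin f by (auto simp: prod_zero_iff)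
qed

lemma indep_helper:
  fixes A :: "((nat \<Rightarrow> real) \<Rightarrow> real) set"
  assumes fin: "finite A"
    and sep: "\<And>x. x \<in> A \<Longrightarrow> \<exists>p. x p \<noteq> 0 \<and> (\<forall>y\<in>A. y \<noteq> x \<longrightarrow> y p = 0)"
  shows "\<not> module.dependent fscale A"
proof -
  interpret V: vector_space fscale by (rule vs_fscale)
  have key: "u x = 0" if fint: "finite t" and tA: "t \<subseteq> A"
    and sum: "(\<Sum>v\<in>t. fscale (u v) v) = 0" and x: "x \<in> t" for t u x
  proof -
    obtain p where p: "x p \<noteq> 0" "\<forall>y\<in>A. y \<noteq> x \<longrightarrow> y p = 0" using sep x tA by blast
    have "0 = (\<Sum>y\<in>t. fscale (u y) y) p" using sum by simp
    also have "\<dots> = (\<Sum>y\<in>t. u y * y p)" by (simp add: sum_fun_apply fscale_def)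
    also have "\<dots> = u x * x p + (\<Sum>y\<in>t - {x}. u y * y p)"
      using x fint by (simp add: sum.remove)
    also have "(\<Sum>y\<in>t - {x}. u y * y p) = 0"
      by (rule sum.neutral) (use p(2) tA in auto)
    finally have "u x * x p = 0" by simp
    then show "u x = 0" using p(1) by simp
  qed
  show ?thesis
    unfolding V.dependent_explicit using key by blast
qed

theorem lemma2:
  fixes n d :: nat
  assumes "1 \<le> d" and "2 * d \<le> n"
  shows "\<exists>\<M> \<S>.
    (\<forall>M\<in>\<M>. is_matching n d M) \<and>
    (\<forall>S\<in>\<S>. S \<subseteq> {1..n} \<and> card S = d) \<and>
    real (card \<M>) \<ge> real (n choose d) / (4 * 2 ^ d) \<and>
    (\<forall>S\<in>\<S>. \<exists>!M. M \<in> \<M> \<and> fully_crosses M S) \<and>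
    (\<forall>M\<in>\<M>. \<exists>S\<in>\<S>. fully_crosses M S) \<and>
    (\<forall>S\<in>\<S>. \<exists>!M. M \<in> \<M> \<and> qM M (indic S) \<noteq> 0) \<and>
    vector_space.dim fscale (module.span fscale (qM ` \<M>)) = card \<M>"
proof -
  define B where "B = {d+1..n}"
  have cardB: "card B = n - d" by (simp add: B_def)
  have finB: "finite B" by (simp add: B_def)
  define cf where "cf = (\<lambda>i. (n - d) choose i)"
  have "Max (cf ` {..d}) \<in> cf ` {..d}" by (rule Max_in) auto
  then obtain j where j: "j \<le> d" "cf j = Max (cf ` {..d})"
    by (metis atMost_iff imageE)
  have jmax: "cf i \<le> cf j" if "i \<le> d" for i
    using j(2) that by (metis Max_ge atMost_iff finite_atMost finite_imageI image_eqI)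
  define k where "k = d - j"
  define W where "W = {X. X \<subseteq> B \<and> card X = j}"
  have cardW: "card W = (n-d) choose j" using n_subsets[OF finB, of j] cardB by (simp add: W_def)
  have finW: "finite W"
    by (rule finite_subset[of _ "Pow B"]) (auto simp: W_def finB)
  have ex: "\<forall>X\<in>W. \<exists>g. inj_on g {1..d} \<and> g ` {k+1..d} = X \<and> g ` {1..k} \<subseteq> B - X"
  proof
    fix X assume X: "X \<in> W"
    then have XB: "X \<subseteq> B" and cX: "card X = j" by (auto simp: W_def)
    have finX: "finite X" using XB finB finite_subset by blast
    have "card (B - X) = n - d - j" using card_Diff_subset[OF finX XB] cardB cX by simp
    then have "k \<le> card (B - X)" using assms j by (simp add: k_def)
    then obtain Y where Y: "Y \<subseteq> B - X" "card Y = k"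
      using obtain_subset_with_card_n by metis
    have finY: "finite Y" using Y(1) finB finite_subset by blast
    obtain g1 where g1: "bij_betw g1 {1..k} Y"
      using finite_same_card_bij[of "{1..k}" Y] finY Y(2) by auto
    have "card {k+1..d} = card X" using cX j by (simp add: k_def)
    then obtain g2 where g2: "bij_betw g2 {k+1..d} X"
      using finite_same_card_bij[of "{k+1..d}" X] finX by auto
    define g where "g = (\<lambda>a. if a \<le> k then g1 a else g2 a)"
    have im1: "g ` {1..k} = Y"
    proof -
      have "g ` {1..k} = g1 ` {1..k}" by (rule image_cong) (auto simp: g_def)
      then show ?thesis using g1 by (simp add: bij_betw_def)
    qed
    have im2: "g ` {k+1..d} = X"
    proof -
      have "g ` {k+1..d} = g2 ` {k+1..d}" by (rule image_cong) (auto simp: g_def)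
      then show ?thesis using g2 by (simp add: bij_betw_def)
    qed
    have "inj_on g {1..d}"
    proof (rule inj_onI)
      fix a b assume a: "a \<in> {1..d}" and b: "b \<in> {1..d}" and eq: "g a = g b"
      show "a = b"
      proof (cases "a \<le> k"; cases "b \<le> k")
        assume "a \<le> k" "b \<le> k"
        then have "g1 a = g1 b" using eq by (simp add: g_def)
        then show ?thesis using bij_betw_imp_inj_on[OF g1] a b \<open>a \<le> k\<close> \<open>b \<le> k\<close>
          by (simp add: inj_on_eq_iff)
      next
        assume "\<not> a \<le> k" "\<not> b \<le> k"
        then have "g2 a = g2 b" using eq by (simp add: g_def)
        then show ?thesis using bij_betw_imp_inj_on[OF g2] a b \<open>\<not> a \<le> k\<close> \<open>\<not> b \<le> k\<close>
          by (simp add: inj_on_eq_iff)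
      next
        assume ab: "a \<le> k" "\<not> b \<le> k"
        have "g a \<in> Y" using im1 ab a by auto
        moreover have "g b \<in> X" using im2 ab b by auto
        ultimately show ?thesis using eq Y(1) by auto
      next
        assume ab: "\<not> a \<le> k" "b \<le> k"
        have "g b \<in> Y" using im1 ab b by auto
        moreover have "g a \<in> X" using im2 ab a by auto
        ultimately show ?thesis using eq Y(1) by auto
      qed
    qed
    then show "\<exists>g. inj_on g {1..d} \<and> g ` {k+1..d} = X \<and> g ` {1..k} \<subseteq> B - X"
      using im1 im2 Y(1) by blast
  qed
  have "\<exists>G. \<forall>X\<in>W. inj_on (G X) {1..d} \<and> G X ` {k+1..d} = X \<and> G X ` {1..k} \<subseteq> B - X"
    by (rule bchoice[OF ex])
  then obtain G where G:
    "\<forall>X\<in>W. inj_on (G X) {1..d} \<and> G X ` {k+1..d} = X \<and> G X ` {1..k} \<subseteq> B - X" ..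
  define Mof where "Mof = (\<lambda>X. (\<lambda>a. {a, G X a}) ` {1..d})"
  define Sof where "Sof = (\<lambda>X::nat set. {1..k} \<union> X)"
  have Gall: "inj_on (G X) {1..d} \<and> G X ` {k+1..d} = X \<and> G X ` {1..k} \<subseteq> B - X"
    if "X \<in> W" for X by (rule bspec[OF G that])
  have XB: "X \<subseteq> B" if "X \<in> W" for X using that by (simp add: W_def)
  have Glo: "G X a \<in> B \<and> G X a \<notin> X" if "X \<in> W" "a \<in> {1..d}" "a \<le> k" for X a
  proof -
    have "G X a \<in> G X ` {1..k}" using that by auto
    moreover have "G X ` {1..k} \<subseteq> B - X" using Gall[OF that(1)] by (elim conjE)
    ultimately show ?thesis by blast
  qed
  have Ghi: "G X a \<in> X" if "X \<in> W" "a \<in> {1..d}" "\<not> a \<le> k" for X a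
  proof -
    have "G X a \<in> G X ` {k+1..d}" using that by auto
    moreover have "G X ` {k+1..d} = X" using Gall[OF that(1)] by (elim conjE)
    ultimately show ?thesis by blast
  qed
  have GB: "G X a \<in> B" if "X \<in> W" "a \<in> {1..d}" for X a
    using Glo[OF that] Ghi[OF that] XB[OF that(1)] by (cases "a \<le> k") auto
  have Bgt: "b \<in> B \<Longrightarrow> d < b \<and> b \<le> n" for b by (auto simp: B_def)
  have kd: "k \<le> d" by (simp add: k_def)
  have match: "is_matching n d (Mof X)" if X: "X \<in> W" for X
  proof -
    have inj: "inj_on (\<lambda>a. {a, G X a}) {1..d}"
    proof (rule inj_onI)
      fix a b assume a: "a \<in> {1..d}" and b: "b \<in> {1..d}" and eq: "{a, G X a} = {b, G X b}"
      have "d < G X a" "d < G X b" using GB[OF X a] GB[OF X b] Bgt by auto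
      then show "a = b" using eq a b by (auto simp: doubleton_eq_iff)
    qed
    show ?thesis unfolding is_matching_def
    proof (intro conjI ballI impI)
      fix e assume "e \<in> Mof X"
      then obtain a where a: "a \<in> {1..d}" "e = {a, G X a}" by (auto simp: Mof_def)
      have "d < G X a" "G X a \<le> n" using GB[OF X a(1)] Bgt by auto
      then show "e \<subseteq> {1..n}" "card e = 2" using a assms by auto
    next
      fix e e' assume e: "e \<in> Mof X" and e': "e' \<in> Mof X" and ne: "e \<noteq> e'"
      obtain a where a: "a \<in> {1..d}" "e = {a, G X a}" using e by (auto simp: Mof_def)
      obtain b where b: "b \<in> {1..d}" "e' = {b, G X b}" using e' by (auto simp: Mof_def)
      have "a \<noteq> b" using ne a b by auto
      moreover have "d < G X a" "d < G X b" using GB[OF X a(1)] GB[OF X b(1)] Bgt by auto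
      moreover have "G X a \<noteq> G X b"
      proof -
        have "inj_on (G X) {1..d}" using Gall[OF X] by (elim conjE)
        then show ?thesis using a(1) b(1) \<open>a \<noteq> b\<close> by (simp add: inj_on_eq_iff)
      qed
      ultimately show "e \<inter> e' = {}" using a b by auto
    next
      show "finite (Mof X)" by (simp add: Mof_def)
      show "card (Mof X) = d" using card_image[OF inj] by (simp add: Mof_def)
    qed
  qed
  have cross: "fully_crosses (Mof X') (Sof X) \<longleftrightarrow> X' = X" if X: "X \<in> W" and X': "X' \<in> W" for X X'
  proof
    assume fc: "fully_crosses (Mof X') (Sof X)"
    have sub: "X' \<subseteq> X"
    proof
      fix w assume w: "w \<in> X'"
      have "G X' ` {k+1..d} = X'" using Gall[OF X'] by (elim conjE)
      then obtain a where a: "a \<in> {k+1..d}" "w = G X' a" using w by blast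
      have a1: "a \<in> {1..d}" "\<not> a \<le> k" using a(1) by auto
      have "{a, w} \<in> Mof X'" using a1 a(2) by (auto simp: Mof_def)
      then have c: "card ({a, w} \<inter> Sof X) = 1" using fc by (simp add: fully_crosses_def)
      have "a \<notin> Sof X" using a1 XB[OF X] by (auto simp: Sof_def B_def)
      then have "w \<in> Sof X" using c by (cases "w \<in> Sof X") (auto simp: Int_insert_left)
      moreover have "w \<in> B" using w XB[OF X'] by auto
      ultimately show "w \<in> X" using kd by (auto simp: Sof_def B_def)
    qed
    have "finite X" using XB[OF X] finB finite_subset by blast
    moreover have "card X' = card X" using X X' by (simp add: W_def)
    ultimately show "X' = X" using sub card_subset_eq by blast
  next
    assume "X' = X"
    show "fully_crosses (Mof X') (Sof X)" unfolding fully_crosses_def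
    proof
      fix e assume "e \<in> Mof X'"
      then obtain a where a: "a \<in> {1..d}" "e = {a, G X a}" using \<open>X' = X\<close> by (auto simp: Mof_def)
      show "card (e \<inter> Sof X) = 1"
      proof (cases "a \<le> k")
        case True
        then have "G X a \<notin> Sof X" using Glo[OF X a(1) True] kd by (auto simp: Sof_def B_def)
        moreover have "a \<in> Sof X" using True a(1) by (simp add: Sof_def)
        ultimately show ?thesis using a(2) by (simp add: Int_insert_left)
      next
        case False
        then have "G X a \<in> Sof X" using Ghi[OF X a(1) False] by (auto simp: Sof_def)
        moreover have "a \<notin> Sof X" using False a(1) XB[OF X] by (auto simp: Sof_def B_def)
        ultimately show ?thesis using a(2) by (simp add: Int_insert_left)
      qed
    qed
  qed
  have injM: "inj_on Mof W"
  proof (rule inj_onI)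
    fix X X' assume X: "X \<in> W" and X': "X' \<in> W" and eq: "Mof X = Mof X'"
    have "fully_crosses (Mof X) (Sof X)" using cross[OF X X] by simp
    then have "fully_crosses (Mof X') (Sof X)" using eq by simp
    then show "X = X'" using cross[OF X X'] by simp
  qed
  have cardM: "card (Mof ` W) = (n-d) choose j" using card_image[OF injM] cardW by simp
  have qz: "qM (Mof X') (indic (Sof X)) \<noteq> 0 \<longleftrightarrow> X' = X" if "X \<in> W" "X' \<in> W" for X X'
    using qM_indic[OF match[OF that(2)]] cross[OF that] by simp
  have injq: "inj_on qM (Mof ` W)"
  proof (rule inj_onI)
    fix M M' assume "M \<in> Mof ` W" "M' \<in> Mof ` W" and eq: "qM M = qM M'"
    then obtain X X' where X: "X \<in> W" "M = Mof X" and X': "X' \<in> W" "M' = Mof X'" by auto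
    have "qM (Mof X) (indic (Sof X)) \<noteq> 0" using qz[OF X(1) X(1)] by simp
    then have "qM (Mof X') (indic (Sof X)) \<noteq> 0" using eq X X' by simp
    then show "M = M'" using qz[OF X(1) X'(1)] X X' by simp
  qed
  interpret V: vector_space fscale by (rule vs_fscale)
  have indep: "V.independent (qM ` Mof ` W)"
  proof (rule indep_helper)
    show "finite (qM ` Mof ` W)" using finW by simp
  next
    fix x assume x: "x \<in> qM ` Mof ` W"
    then obtain X where X: "X \<in> W" "x = qM (Mof X)" by auto
    show "\<exists>p. x p \<noteq> 0 \<and> (\<forall>y\<in>qM ` Mof ` W. y \<noteq> x \<longrightarrow> y p = 0)"
    proof (intro exI conjI ballI impI)
      show "x (indic (Sof X)) \<noteq> 0" using qz[OF X(1) X(1)] X by simp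
    next
      fix y assume y: "y \<in> qM ` Mof ` W" "y \<noteq> x"
      then obtain X' where X': "X' \<in> W" "y = qM (Mof X')" by auto
      have "X' \<noteq> X" using y X X' by auto
      then show "y (indic (Sof X)) = 0" using qz[OF X(1) X'(1)] X' by simp
    qed
  qed
  have dimeq: "V.dim (V.span (qM ` Mof ` W)) = card (Mof ` W)"
  proof -
    have "V.dim (V.span (qM ` Mof ` W)) = card (qM ` Mof ` W)"
      by (rule V.dim_span_eq_card_independent[OF indep])
    also have "\<dots> = card (Mof ` W)" by (rule card_image[OF injq])
    finally show ?thesis .
  qed
  have ineq: "real (n choose d) / (4 * 2 ^ d) \<le> real (card (Mof ` W))"
  proof -
    have "n choose d = (\<Sum>i\<le>d. (d choose i) * ((n - d) choose (d - i)))"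
      using vandermonde[of d "n - d" d] assms by simp
    also have "\<dots> \<le> (\<Sum>i\<le>d. (d choose i) * cf j)"
    proof (rule sum_mono)
      fix i assume "i \<in> {..d}"
      have "cf (d - i) \<le> cf j" by (rule jmax) simp
      then show "(d choose i) * ((n - d) choose (d - i)) \<le> (d choose i) * cf j"
        by (simp add: cf_def)
    qed
    also have "\<dots> = 2 ^ d * cf j" by (simp add: sum_distrib_right[symmetric] choose_row_sum)
    finally have "real (n choose d) \<le> real (2 ^ d * cf j)" by (simp only: of_nat_le_iff)
    then have "real (n choose d) \<le> 2 ^ d * real (cf j)" by simp
    moreover have "0 \<le> 2 ^ d * real (cf j)" by simp
    ultimately have "real (n choose d) \<le> 4 * (2 ^ d * real (cf j))" by linarith
    then have "real (n choose d) / (4 * 2 ^ d) \<le> real (cf j)"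
      by (simp add: divide_le_eq algebra_simps)
    then show ?thesis using cardM by (simp add: cf_def)
  qed
  show ?thesis
  proof (intro exI[of _ "Mof ` W"] exI[of _ "Sof ` W"] conjI)
    show "\<forall>M\<in>Mof ` W. is_matching n d M" using match by auto
    show "\<forall>S\<in>Sof ` W. S \<subseteq> {1..n} \<and> card S = d"
    proof
      fix S assume "S \<in> Sof ` W"
      then obtain X where X: "X \<in> W" "S = Sof X" by auto
      have dis: "{1..k} \<inter> X = {}" using XB[OF X(1)] kd by (auto simp: B_def)
      have finX: "finite X" using XB[OF X(1)] finB finite_subset by blast
      have "card S = k + j" using card_Un_disjoint[OF _ finX dis] X by (simp add: Sof_def W_def)
      moreover have "S \<subseteq> {1..n}" using X XB[OF X(1)] kd assms by (auto simp: Sof_def B_def)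
      ultimately show "S \<subseteq> {1..n} \<and> card S = d" using j by (simp add: k_def)
    qed
    show "real (n choose d) / (4 * 2 ^ d) \<le> real (card (Mof ` W))" by (rule ineq)
    show "\<forall>S\<in>Sof ` W. \<exists>!M. M \<in> Mof ` W \<and> fully_crosses M S"
    proof
      fix S assume "S \<in> Sof ` W"
      then obtain X where X: "X \<in> W" "S = Sof X" by auto
      show "\<exists>!M. M \<in> Mof ` W \<and> fully_crosses M S"
      proof (rule ex1I[of _ "Mof X"])
        show "Mof X \<in> Mof ` W \<and> fully_crosses (Mof X) S" using X cross[OF X(1) X(1)] by simp
      next
        fix M assume "M \<in> Mof ` W \<and> fully_crosses M S"
        then obtain X' where "X' \<in> W" "M = Mof X'" "fully_crosses (Mof X') (Sof X)" using X by auto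
        then show "M = Mof X" using cross[OF X(1)] by auto
      qed
    qed
    show "\<forall>M\<in>Mof ` W. \<exists>S\<in>Sof ` W. fully_crosses M S"
      using cross by blast
    show "\<forall>S\<in>Sof ` W. \<exists>!M. M \<in> Mof ` W \<and> qM M (indic S) \<noteq> 0"
    proof
      fix S assume "S \<in> Sof ` W"
      then obtain X where X: "X \<in> W" "S = Sof X" by auto
      show "\<exists>!M. M \<in> Mof ` W \<and> qM M (indic S) \<noteq> 0"
      proof (rule ex1I[of _ "Mof X"])
        show "Mof X \<in> Mof ` W \<and> qM (Mof X) (indic S) \<noteq> 0" using X qz[OF X(1) X(1)] by simp
      next
        fix M assume "M \<in> Mof ` W \<and> qM M (indic S) \<noteq> 0"
        then obtain X' where "X' \<in> W" "M = Mof X'" "qM (Mof X') (indic (Sof X)) \<noteq> 0" using X by auto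
        then show "M = Mof X" using qz[OF X(1)] by auto
      qed
    qed
    show "V.dim (V.span (qM ` Mof ` W)) = card (Mof ` W)" by (rule dimeq)
  qed
qed

end
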